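(* Let $(a_n)_{n\ge0}$ and $(a'_n)_{n\ge0}$ be sequences of positive real numbers and $(b_n)_{n\ge0}$ a sequence of real numbers such that, for all sufficiently large $n$: (i) $\frac{a'_{n+1}}{a'_n}\leq\frac{a_{n+1}}{a_n}$; (ii) $a_n\leq a'_n+b_n$; and (iii) $\frac{b_n}{a'_n}<R$ for some fixed real number $R$. Then there exists a strictly increasing sequence of natural numbers $(n_i)_{i\ge0}$ such that \[\lim_{i\to\infty}\frac{a_{n_i+1}/a_{n_i}}{a'_{n_i+1}/a'_{n_i}}=1.\] *)

theory Defs
  imports "HOL-Analysis.Analysis"
begin

end

theory Submission
  imports Defs
begin

theorem mainTheorem3:
  fixes a a' b :: "nat \<Rightarrow> real"
  assumes apos: "\<And>n. a n > 0"
    and a'pos: "\<And>n. a' n > 0"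
    and ev: "\<exists>R::real. \<forall>\<^sub>F n in sequentially.
               a' (Suc n) / a' n \<le> a (Suc n) / a n
             \<and> a n \<le> a' n + b n
             \<and> b n / a' n < R"
  shows "\<exists>ni :: nat \<Rightarrow> nat. strict_mono ni \<and>
           ((\<lambda>i. (a (Suc (ni i)) / a (ni i)) / (a' (Suc (ni i)) / a' (ni i)))
              \<longlonglongrightarrow> 1)"
proof -
  obtain R where "\<forall>\<^sub>F n in sequentially.
               a' (Suc n) / a' n \<le> a (Suc n) / a n
             \<and> a n \<le> a' n + b n
             \<and> b n / a' n < R" using ev by blast
  then obtain N where H: "\<And>n. n \<ge> N \<Longrightarrow> a' (Suc n) / a' n \<le> a (Suc n) / a n
             \<and> a n \<le> a' n + b n \<and> b n / a' n < R"
    unfolding eventually_sequentially by blast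
  define c where "c n = a n / a' n" for n
  have cpos: "c n > 0" for n using apos a'pos by (simp add: c_def)
  have cmono: "c n \<le> c (Suc n)" if "n \<ge> N" for n
  proof -
    have h: "a' (Suc n) / a' n \<le> a (Suc n) / a n" using H[OF that] by blast
    have "a' (Suc n) * a n \<le> a (Suc n) * a' n"
      using h apos[of n] a'pos[of n] by (simp add: field_simps)
    thus ?thesis unfolding c_def
      using apos a'pos by (simp add: field_simps)
  qed
  have cbd: "c n \<le> 1 + R" if "n \<ge> N" for n
  proof -
    have h1: "a n \<le> a' n + b n" and h2: "b n / a' n < R" using H[OF that] by auto
    have "c n \<le> (a' n + b n) / a' n" unfolding c_def
      using h1 a'pos[of n] by (simp add: divide_right_mono)
    also have "\<dots> = 1 + b n / a' n" using a'pos[of n] by (simp add: field_simps)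
    finally show ?thesis using h2 by simp
  qed
  define d where "d n = c (n + N)" for n
  have "incseq d" unfolding d_def
    by (rule incseq_SucI) (simp add: cmono)
  moreover have "\<forall>i. d i \<le> 1 + R" unfolding d_def using cbd by simp
  ultimately obtain L where dL: "d \<longlonglongrightarrow> L" and dle: "\<forall>i. d i \<le> L"
    using incseq_convergent by blast
  have "L > 0" using dle cpos[of N] unfolding d_def by (metis add_0 less_le_trans)
  have cL: "c \<longlonglongrightarrow> L" using dL unfolding d_def by (rule LIMSEQ_offset)
  have cL2: "(\<lambda>n. c (Suc n)) \<longlonglongrightarrow> L" using cL by (rule LIMSEQ_Suc)
  have "(\<lambda>n. c (Suc n) / c n) \<longlonglongrightarrow> L / L"
    using tendsto_divide[OF cL2 cL] \<open>L > 0\<close> by simp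
  hence lim: "(\<lambda>n. c (Suc n) / c n) \<longlonglongrightarrow> 1" using \<open>L > 0\<close> by simp
  have eq: "(a (Suc n) / a n) / (a' (Suc n) / a' n) = c (Suc n) / c n" for n
    unfolding c_def using apos a'pos by (simp add: field_simps)
  show ?thesis
  proof (rule exI[of _ id], intro conjI)
    show "strict_mono (id :: nat \<Rightarrow> nat)" by (simp add: strict_mono_def)
    show "(\<lambda>i. (a (Suc (id i)) / a (id i)) / (a' (Suc (id i)) / a' (id i))) \<longlonglongrightarrow> 1"
      unfolding id_def eq by (rule lim)
  qed
qed

end
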